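(* For all integers $m\ge 4$ and $n\ge 10$, the complete bipartite graph $K_{m,n}$ belongs to $\mathcal{S}_3$.
   Context: $G\in\mathcal{S}_3$ means: for every $\beta:V(G)\to\mathbb{Z}_3$ with $\sum_v\beta(v)\equiv0\pmod3$ there is a strongly-connected orientation $D$ of $G$ with $d^+_D(v)-d^-_D(v)\equiv\beta(v)\pmod3$ for all $v$. *)

theory Defs
  imports Main
begin

definition simple_graph :: "'a set \<Rightarrow> 'a set set \<Rightarrow> bool" where
  "simple_graph V E \<longleftrightarrow> finite V \<and> (\<forall>e\<in>E. e \<subseteq> V \<and> card e = 2)"

definition is_orientation :: "'a set set \<Rightarrow> ('a \<times> 'a) set \<Rightarrow> bool" where
  "is_orientation E D \<longleftrightarrow>
     (\<forall>(u,v)\<in>D. {u,v} \<in> E \<and> u \<noteq> v) \<and>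
     (\<forall>u v. {u,v} \<in> E \<and> u \<noteq> v \<longrightarrow> ((u,v) \<in> D \<longleftrightarrow> (v,u) \<notin> D))"

definition strongly_connected :: "'a set \<Rightarrow> ('a \<times> 'a) set \<Rightarrow> bool" where
  "strongly_connected V D \<longleftrightarrow> (\<forall>u\<in>V. \<forall>v\<in>V. (u,v) \<in> D\<^sup>*)"

definition out_deg :: "('a \<times> 'a) set \<Rightarrow> 'a \<Rightarrow> nat" where
  "out_deg D v = card {w. (v,w) \<in> D}"

definition in_deg :: "('a \<times> 'a) set \<Rightarrow> 'a \<Rightarrow> nat" where
  "in_deg D v = card {w. (w,v) \<in> D}"

definition in_S3 :: "'a set \<Rightarrow> 'a set set \<Rightarrow> bool" where
  "in_S3 V E \<longleftrightarrow>
     (\<forall>\<beta> :: 'a \<Rightarrow> int. (\<forall>v\<in>V. \<beta> v \<in> {0,1,2}) \<and> (\<Sum>v\<in>V. \<beta> v) mod 3 = 0 \<longrightarrow>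
        (\<exists>D. is_orientation E D \<and> strongly_connected V D \<and>
             (\<forall>v\<in>V. (int (out_deg D v) - int (in_deg D v)) mod 3 = \<beta> v mod 3)))"

definition Kmn_vertices :: "nat \<Rightarrow> nat \<Rightarrow> (nat + nat) set" where
  "Kmn_vertices m n = Inl ` {..<m} \<union> Inr ` {..<n}"

definition Kmn_edges :: "nat \<Rightarrow> nat \<Rightarrow> (nat + nat) set set" where
  "Kmn_edges m n = {{Inl i, Inr j} | i j. i < m \<and> j < n}"

end

theory Submission
  imports Defs
begin


lemma card_less_Suc:
  "card {i. i < Suc k \<and> P i} = card {i. i < k \<and> P i} + (if P k then 1 else 0)"
proof -
  have "{i. i < Suc k \<and> P i} = {i. i < k \<and> P i} \<union> (if P k then {k} else {})"
    by (auto simp: less_Suc_eq)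
  then show ?thesis by (auto simp: card_insert_if)
qed

definition uu :: "(nat \<Rightarrow> nat) \<Rightarrow> nat \<Rightarrow> nat" where
  "uu \<sigma> i = (if \<sigma> i mod 3 = 0 then 3 else \<sigma> i mod 3)"
definition zz :: "nat \<Rightarrow> (nat \<Rightarrow> nat) \<Rightarrow> nat \<Rightarrow> nat" where
  "zz m \<sigma> c = card {i. 4 \<le> i \<and> i < m \<and> \<not> c < uu \<sigma> i}"
definition kc :: "nat \<Rightarrow> (nat \<Rightarrow> nat) \<Rightarrow> (nat \<Rightarrow> nat) \<Rightarrow> nat \<Rightarrow> nat" where
  "kc m \<sigma> \<rho> c = (\<rho> c + 3 - (1 + zz m \<sigma> c) mod 3) mod 3"
definition dd :: "nat \<Rightarrow> (nat \<Rightarrow> nat) \<Rightarrow> nat \<Rightarrow> nat" where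
  "dd m \<rho> j = (m + 2 - \<rho> j) mod 3"
definition rj :: "nat \<Rightarrow> nat" where
  "rj j = (if j < 10 then (j - 4) div 2 else 0)"
definition xg :: "nat \<Rightarrow> (nat \<Rightarrow> nat) \<Rightarrow> (nat \<Rightarrow> nat) \<Rightarrow> (nat \<Rightarrow> bool) \<Rightarrow> nat \<Rightarrow> nat \<Rightarrow> bool" where
  "xg m \<sigma> \<rho> t i j =
   (if 4 \<le> i then j < uu \<sigma> i
    else if j < 4 then (if i = j then True else if i = (j+1) mod 4 then False
         else if i = (j+2) mod 4 then kc m \<sigma> \<rho> j < 1 else kc m \<sigma> \<rho> j < 2)
    else ((if t j then i = rj j else i = 3) \<or> (i = (rj j + 1) mod 3 \<and> 1 \<le> dd m \<rho> j)
          \<or> (i = (rj j + 2) mod 3 \<and> 2 \<le> dd m \<rho> j)))"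
definition kt :: "nat \<Rightarrow> nat \<Rightarrow> (nat \<Rightarrow> nat) \<Rightarrow> (nat \<Rightarrow> nat) \<Rightarrow> nat \<Rightarrow> nat" where
  "kt m n \<sigma> \<rho> r = (\<sigma> r + 3 - card {j. j < n \<and> xg m \<sigma> \<rho> (\<lambda>_. False) r j} mod 3) mod 3"
definition tt :: "nat \<Rightarrow> nat \<Rightarrow> (nat \<Rightarrow> nat) \<Rightarrow> (nat \<Rightarrow> nat) \<Rightarrow> nat \<Rightarrow> bool" where
  "tt m n \<sigma> \<rho> j = (4 \<le> j \<and> j < 10 \<and> (if even j then 1 \<le> kt m n \<sigma> \<rho> (rj j) else 2 \<le> kt m n \<sigma> \<rho> (rj j)))"

lemma core_cycle:
  "xg m \<sigma> \<rho> t 0 0" "\<not> xg m \<sigma> \<rho> t 1 0" "xg m \<sigma> \<rho> t 1 1" "\<not> xg m \<sigma> \<rho> t 2 1"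
  "xg m \<sigma> \<rho> t 2 2" "\<not> xg m \<sigma> \<rho> t 3 2" "xg m \<sigma> \<rho> t 3 3" "\<not> xg m \<sigma> \<rho> t 0 3"
  by (simp_all add: xg_def)

lemma rows_ge4: "4 \<le> i \<Longrightarrow> xg m \<sigma> \<rho> t i 0 \<and> \<not> xg m \<sigma> \<rho> t i 3"
  by (simp add: xg_def uu_def) presburger

lemma cols_ge4: assumes "4 \<le> j" "j < n"
  shows "(\<exists>r<4. xg m \<sigma> \<rho> t r j) \<and> (\<exists>r<4. \<not> xg m \<sigma> \<rho> t r j)"
proof -
  have r: "rj j < 3" unfolding rj_def by presburger
  show ?thesis
  proof (cases "t j")
    case True
    then have "xg m \<sigma> \<rho> t (rj j) j" "\<not> xg m \<sigma> \<rho> t 3 j" using assms r by (auto simp: xg_def)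
    moreover have "rj j < 4" "(3::nat) < 4" using r by auto
    ultimately show ?thesis by blast
  next
    case False
    have "rj j \<noteq> (rj j + 1) mod 3" "rj j \<noteq> (rj j + 2) mod 3" using r by presburger+
    then have "xg m \<sigma> \<rho> t 3 j" "\<not> xg m \<sigma> \<rho> t (rj j) j" using assms r False by (auto simp: xg_def)
    moreover have "rj j < 4" "(3::nat) < 4" using r by auto
    ultimately show ?thesis by blast
  qed
qed

lemma fixmod: "((r + 3 - a mod 3) mod 3 + (a::nat)) mod 3 = r mod 3"
proof -
  have "a mod 3 < 3" by simp
  have e: "r + 3 - a mod 3 + a = r + 3 * (1 + a div 3)"
  proof -
    have aux: "\<And>q b. a = q * 3 + b \<Longrightarrow> b < 3 \<Longrightarrow> r + 3 - b + a = r + 3 * (1 + q)" by auto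
    show ?thesis using aux[of "a div 3" "a mod 3"] by simp
  qed
  have "((r + 3 - a mod 3) mod 3 + a) mod 3 = (r + 3 - a mod 3 + a) mod 3"
    by (simp add: mod_add_left_eq)
  also have "\<dots> = r mod 3" unfolding e by (metis mod_mult_self2)
  finally show ?thesis .
qed

lemma card4: "card {i. i < (4::nat) \<and> P i} =
   (if P 0 then 1 else 0) + (if P 1 then 1 else 0) + (if P 2 then 1 else 0) + (if P 3 then 1 else 0)"
proof -
  have e: "{i. i < (4::nat) \<and> P i} = {i. i < Suc (Suc (Suc (Suc 0))) \<and> P i}" by (simp add: eval_nat_numeral)
  show ?thesis unfolding e card_less_Suc by (simp add: numeral_2_eq_2 numeral_3_eq_3)
qed

lemma split_card: assumes "4 \<le> (m::nat)"
  shows "card {i. i < m \<and> P i} = card {i. i < 4 \<and> P i} + card {i. 4 \<le> i \<and> i < m \<and> P i}"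
proof -
  have "{i. i < m \<and> P i} = {i. i < 4 \<and> P i} \<union> {i. 4 \<le> i \<and> i < m \<and> P i}" using assms by auto
  moreover have "{i. i < 4 \<and> P i} \<inter> {i. 4 \<le> i \<and> i < m \<and> P i} = {}" by auto
  moreover have "finite {i. i < 4 \<and> P i}" "finite {i. 4 \<le> i \<and> i < m \<and> P i}" by auto
  ultimately show ?thesis by (simp add: card_Un_disjoint)
qed

lemma row_ge4: assumes "4 \<le> i" "4 \<le> n"
  shows "card {j. j < n \<and> xg m \<sigma> \<rho> t i j} mod 3 = \<sigma> i mod 3"
proof -
  have u: "uu \<sigma> i \<le> 3" "uu \<sigma> i mod 3 = \<sigma> i mod 3" unfolding uu_def by auto
  have "{j. j < n \<and> xg m \<sigma> \<rho> t i j} = {..<uu \<sigma> i}" using assms u by (auto simp: xg_def)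
  then show ?thesis using u by simp
qed

lemma col_core: assumes "c < 4" "4 \<le> m"
  shows "card {i. i < m \<and> \<not> xg m \<sigma> \<rho> t i c} mod 3 = \<rho> c mod 3"
proof -
  have k: "kc m \<sigma> \<rho> c < 3" by (simp add: kc_def)
  have a: "card {i. i < 4 \<and> \<not> xg m \<sigma> \<rho> t i c} = 1 + kc m \<sigma> \<rho> c"
  proof -
    have "c = 0 \<or> c = 1 \<or> c = 2 \<or> c = 3" using assms by auto
    moreover have "kc m \<sigma> \<rho> c = 0 \<or> kc m \<sigma> \<rho> c = 1 \<or> kc m \<sigma> \<rho> c = 2" using k by auto
    ultimately show ?thesis unfolding card4 by (elim disjE) (simp_all add: xg_def)
  qed
  have b: "card {i. 4 \<le> i \<and> i < m \<and> \<not> xg m \<sigma> \<rho> t i c} = zz m \<sigma> c"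
    unfolding zz_def by (rule arg_cong[where f=card]) (auto simp: xg_def)
  show ?thesis unfolding split_card[OF assms(2)] a b kc_def using fixmod[of "\<rho> c" "1 + zz m \<sigma> c"] by (simp add: add.assoc)
qed

lemma colarith: "\<rho> < 3 \<Longrightarrow> 4 \<le> (m::nat) \<Longrightarrow> (3 - (m + 2 - \<rho>) mod 3 + (m - 4)) mod 3 = \<rho>"
proof -
  assume a: "\<rho> < 3" "4 \<le> m"
  obtain q s where m: "m = 4 + 3 * q + s" "s < 3"
  proof -
    have "m - 4 = 3 * ((m - 4) div 3) + (m - 4) mod 3" by simp
    then show ?thesis using that[of "(m-4) div 3" "(m-4) mod 3"] a by simp
  qed
  have "s = 0 \<or> s = 1 \<or> s = 2" "\<rho> = 0 \<or> \<rho> = 1 \<or> \<rho> = 2" using a m by auto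
  then show ?thesis unfolding m by (elim disjE; simp add: mod_add_eq[symmetric] mod_Suc)
qed

lemma col_ge4: assumes "4 \<le> j" "4 \<le> m" "\<rho> j < 3"
  shows "card {i. i < m \<and> \<not> xg m \<sigma> \<rho> t i j} mod 3 = \<rho> j"
proof -
  have k: "dd m \<rho> j < 3" "rj j < 3" unfolding dd_def rj_def by simp presburger
  have a: "card {i. i < 4 \<and> \<not> xg m \<sigma> \<rho> t i j} = 3 - dd m \<rho> j"
  proof -
    have "rj j = 0 \<or> rj j = 1 \<or> rj j = 2" using k by auto
    moreover have "dd m \<rho> j = 0 \<or> dd m \<rho> j = 1 \<or> dd m \<rho> j = 2" using k by auto
    ultimately show ?thesis unfolding card4 using assms
      by (cases "t j"; elim disjE) (simp_all add: xg_def)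
  qed
  have u: "\<And>i. uu \<sigma> i \<le> 3" unfolding uu_def by auto
  have b: "card {i. 4 \<le> i \<and> i < m \<and> \<not> xg m \<sigma> \<rho> t i j} = m - 4"
  proof -
    have nx: "\<And>i. 4 \<le> i \<Longrightarrow> \<not> xg m \<sigma> \<rho> t i j"
    proof -
      fix i assume "4 \<le> (i::nat)"
      have "\<not> j < uu \<sigma> i" using u[of i] assms(1) by arith
      then show "\<not> xg m \<sigma> \<rho> t i j" using \<open>4 \<le> i\<close> by (simp add: xg_def)
    qed
    have "{i. 4 \<le> i \<and> i < m \<and> \<not> xg m \<sigma> \<rho> t i j} = {4..<m}"
      using nx by auto
    then show ?thesis by simp
  qed
  show ?thesis unfolding split_card[OF assms(2)] a b dd_def using colarith[OF assms(3) assms(2)] .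
qed

lemma rj_iff: "4 \<le> j \<Longrightarrow> j < 10 \<Longrightarrow> rj j = r \<longleftrightarrow> (j = 4 + 2 * r \<or> j = 5 + 2 * r)"
proof -
  assume "4 \<le> j" "j < 10"
  then have "j = 4 \<or> j = 5 \<or> j = 6 \<or> j = 7 \<or> j = 8 \<or> j = 9" by arith
  then show ?thesis by (elim disjE) (auto simp: rj_def)
qed


lemma xg_ge4: "4 \<le> i \<Longrightarrow> xg m \<sigma> \<rho> t i j = (j < uu \<sigma> i)"
  unfolding xg_def by simp
lemma xg_core: "i < 4 \<Longrightarrow> j < 4 \<Longrightarrow> xg m \<sigma> \<rho> t i j = xg m \<sigma> \<rho> (\<lambda>_. False) i j"
  unfolding xg_def by simp
lemma xg_col: "i < 4 \<Longrightarrow> 4 \<le> j \<Longrightarrow> xg m \<sigma> \<rho> t i j =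
    ((if t j then i = rj j else i = 3) \<or> (i = (rj j + 1) mod 3 \<and> 1 \<le> dd m \<rho> j)
          \<or> (i = (rj j + 2) mod 3 \<and> 2 \<le> dd m \<rho> j))"
  unfolding xg_def by simp

lemma xg_toggle: assumes "i < 3"
  shows "xg m \<sigma> \<rho> t i j \<longleftrightarrow> xg m \<sigma> \<rho> (\<lambda>_. False) i j \<or> (4 \<le> j \<and> t j \<and> rj j = i)"
proof (cases "j < 4")
  case True
  then show ?thesis using assms xg_core[of i j m \<sigma> \<rho> t] by simp
next
  case False
  then show ?thesis using assms xg_col[of i j m \<sigma> \<rho> t] xg_col[of i j m \<sigma> \<rho> "\<lambda>_. False"] by auto
qed

lemma xg_toggle_disj: assumes "i < 3" "4 \<le> j" "rj j = i"
  shows "\<not> xg m \<sigma> \<rho> (\<lambda>_. False) i j"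
proof -
  have neq: "i \<noteq> (i + 1) mod 3" "i \<noteq> (i + 2) mod 3" 
  proof -
    have "i = 0 \<or> i = 1 \<or> i = 2" using assms(1) by auto
    then show "i \<noteq> (i + 1) mod 3" "i \<noteq> (i + 2) mod 3" by auto
  qed
  then show ?thesis using assms xg_col[of i j m \<sigma> \<rho> "\<lambda>_. False"] by auto
qed

lemma row_small: assumes "r < 3" "10 \<le> n"
  shows "card {j. j < n \<and> xg m \<sigma> \<rho> (tt m n \<sigma> \<rho>) r j} mod 3 = \<sigma> r mod 3"
proof -
  let ?x = "xg m \<sigma> \<rho> (tt m n \<sigma> \<rho>)"
  let ?xb = "xg m \<sigma> \<rho> (\<lambda>_. False)"
  let ?k = "kt m n \<sigma> \<rho> r"
  define T where "T = {j. 4 \<le> j \<and> j < 10 \<and> tt m n \<sigma> \<rho> j \<and> rj j = r}"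
  have ttr: "\<And>j. tt m n \<sigma> \<rho> j \<Longrightarrow> 4 \<le> j \<and> j < 10" unfolding tt_def by simp
  have e: "{j. j < n \<and> ?x r j} = {j. j < n \<and> ?xb r j} \<union> T"
  proof (rule set_eqI)
    fix j
    show "j \<in> {j. j < n \<and> ?x r j} \<longleftrightarrow> j \<in> {j. j < n \<and> ?xb r j} \<union> T"
      using xg_toggle[OF assms(1), of m \<sigma> \<rho> "tt m n \<sigma> \<rho>" j] ttr[of j] assms(2) unfolding T_def by auto
  qed
  have d: "{j. j < n \<and> ?xb r j} \<inter> T = {}"
  proof -
    have "\<And>j. j \<in> T \<Longrightarrow> \<not> ?xb r j" using xg_toggle_disj[OF assms(1)] unfolding T_def by blast
    then show ?thesis by blast
  qed
  have T2: "T = {j. (j = 4 + 2 * r \<and> 1 \<le> ?k) \<or> (j = 5 + 2 * r \<and> 2 \<le> ?k)}"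
  proof -
    have "\<And>j. j \<in> T \<longleftrightarrow> (j = 4 + 2 * r \<and> 1 \<le> ?k) \<or> (j = 5 + 2 * r \<and> 2 \<le> ?k)"
    proof -
      fix j
      show "j \<in> T \<longleftrightarrow> (j = 4 + 2 * r \<and> 1 \<le> ?k) \<or> (j = 5 + 2 * r \<and> 2 \<le> ?k)"
      proof (cases "4 \<le> j \<and> j < 10")
        case True
        have mem: "j \<in> T \<longleftrightarrow> tt m n \<sigma> \<rho> j \<and> rj j = r" unfolding T_def using True by auto
        have ev: "even (4 + 2 * r)" "odd (5 + 2 * r)" by simp_all
        show ?thesis
        proof (cases "j = 4 + 2 * r")
          case True
          then have "rj j = r" using rj_iff[of j r] \<open>4 \<le> j \<and> j < 10\<close> by auto
          moreover have "tt m n \<sigma> \<rho> j = (1 \<le> ?k)" unfolding tt_def using \<open>rj j = r\<close> True ev(1) \<open>4 \<le> j \<and> j < 10\<close> by simp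
          ultimately show ?thesis unfolding mem using True by simp
        next
          case F1: False
          show ?thesis
          proof (cases "j = 5 + 2 * r")
            case True
            then have "rj j = r" using rj_iff[of j r] \<open>4 \<le> j \<and> j < 10\<close> by auto
            moreover have "tt m n \<sigma> \<rho> j = (2 \<le> ?k)" unfolding tt_def using \<open>rj j = r\<close> True ev(2) \<open>4 \<le> j \<and> j < 10\<close> by simp
            ultimately show ?thesis unfolding mem using True by simp
          next
            case False
            then have "rj j \<noteq> r" using rj_iff[of j r] \<open>4 \<le> j \<and> j < 10\<close> F1 by blast
            then show ?thesis unfolding mem using F1 False by blast
          qed
        qed
      next
        case False
        then show ?thesis unfolding T_def using assms(1) by auto
      qed
    qed
    then show ?thesis by blast
  qed
  have kk: "?k < 3" unfolding kt_def by simp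
  have cT: "card T = ?k"
  proof -
    have "?k = 0 \<or> ?k = 1 \<or> ?k = 2" using kk by auto
    moreover have "{j. j = 4 + 2 * r \<or> j = 5 + 2 * r} = {4 + 2 * r, 5 + 2 * r}" by auto
    ultimately show ?thesis unfolding T2 by (elim disjE) (simp_all add: card_insert_if)
  qed
  have "card {j. j < n \<and> ?x r j} = card {j. j < n \<and> ?xb r j} + ?k"
    unfolding e using d cT by (simp add: card_Un_disjoint T2)
  then show ?thesis unfolding kt_def using fixmod[of "\<sigma> r" "card {j. j < n \<and> ?xb r j}"]
    by (simp add: add.commute)
qed


lemma card_sum: "card {j. j < (n::nat) \<and> P j} = (\<Sum>j<n. if P j then 1 else (0::nat))"
proof (induction n)
  case 0 then show ?case by simp
next
  case (Suc n)
  have "{j. j < Suc n \<and> P j} = {j. j < n \<and> P j} \<union> (if P n then {n} else {})"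
    by (auto simp: less_Suc_eq)
  then show ?case using Suc by (auto simp: card_insert_if)
qed
lemma mod_cancel: assumes "(a + c) mod 3 = (b + c) mod (3::nat)" shows "a mod 3 = b mod 3"
proof -
  have "a mod 3 = (a + c + 2 * c) mod 3" by simp
  also have "\<dots> = ((a + c) mod 3 + 2 * c) mod 3" by (simp add: mod_add_left_eq)
  also have "\<dots> = ((b + c) mod 3 + 2 * c) mod 3" using assms by simp
  also have "\<dots> = (b + c + 2 * c) mod 3" by (simp add: mod_add_left_eq)
  also have "\<dots> = b mod 3" by simp
  finally show ?thesis .
qed


lemma count_total:
  "(\<Sum>i<m. card {j. j < n \<and> x i j}) + (\<Sum>j<n. card {i. i < m \<and> \<not> x i j}) = m * (n::nat)"
proof -
  have "(\<Sum>i<m. card {j. j < n \<and> x i j}) = (\<Sum>i<m. \<Sum>j<n. if x i j then 1 else (0::nat))"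
    by (simp add: card_sum)
  also have "\<dots> = (\<Sum>j<n. \<Sum>i<m. if x i j then 1 else (0::nat))" by (rule sum.swap)
  finally have a: "(\<Sum>i<m. card {j. j < n \<and> x i j}) = (\<Sum>j<n. \<Sum>i<m. if x i j then 1 else (0::nat))" .
  have b: "(\<Sum>j<n. card {i. i < m \<and> \<not> x i j}) = (\<Sum>j<n. \<Sum>i<m. if \<not> x i j then 1 else (0::nat))"
    by (simp add: card_sum)
  have c: "\<And>j. (\<Sum>i<m. if x i j then 1 else (0::nat)) + (\<Sum>i<m. if \<not> x i j then 1 else (0::nat)) = m"
  proof -
    fix j
    have "(\<Sum>i<m. if x i j then 1 else (0::nat)) + (\<Sum>i<m. if \<not> x i j then 1 else (0::nat))
       = (\<Sum>i<m. (if x i j then 1 else 0) + (if \<not> x i j then 1 else (0::nat)))" by (simp add: sum.distrib)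
    also have "\<dots> = (\<Sum>i<m. 1)" by (rule sum.cong) auto
    finally show "(\<Sum>i<m. if x i j then 1 else (0::nat)) + (\<Sum>i<m. if \<not> x i j then 1 else (0::nat)) = m" by simp
  qed
  have "(\<Sum>j<n. \<Sum>i<m. if x i j then 1 else (0::nat)) + (\<Sum>j<n. \<Sum>i<m. if \<not> x i j then 1 else (0::nat))
     = (\<Sum>j<n. (\<Sum>i<m. if x i j then 1 else (0::nat)) + (\<Sum>i<m. if \<not> x i j then 1 else (0::nat)))"
    by (rule sum.distrib[symmetric])
  also have "\<dots> = (\<Sum>j<n. m)" using c by simp
  finally show ?thesis unfolding a b by simp
qed

definition X :: "nat \<Rightarrow> nat \<Rightarrow> (nat \<Rightarrow> nat) \<Rightarrow> (nat \<Rightarrow> nat) \<Rightarrow> nat \<Rightarrow> nat \<Rightarrow> bool" where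
  "X m n \<sigma> \<rho> = xg m \<sigma> \<rho> (tt m n \<sigma> \<rho>)"

lemma exists_x:
  assumes m: "4 \<le> m" and n: "10 \<le> n" and s3: "\<forall>i. \<sigma> i < 3" and r3: "\<forall>j. \<rho> j < 3"
    and sum: "((\<Sum>i<m. \<sigma> i) + (\<Sum>j<n. \<rho> j)) mod 3 = (m * n) mod 3"
  shows "\<exists>x. x 0 0 \<and> \<not> x 1 0 \<and> x 1 1 \<and> \<not> x 2 1 \<and> x 2 2 \<and> \<not> x 3 2 \<and> x 3 3 \<and> \<not> x 0 3 \<and>
    (\<forall>j. 4 \<le> j \<and> j < n \<longrightarrow> (\<exists>r<4. x r j) \<and> (\<exists>r<4. \<not> x r j)) \<and>
    (\<forall>i. 4 \<le> i \<and> i < m \<longrightarrow> x i 0 \<and> \<not> x i 3) \<and>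
    (\<forall>i<m. card {j. j < n \<and> x i j} mod 3 = \<sigma> i) \<and>
    (\<forall>j<n. card {i. i < m \<and> \<not> x i j} mod 3 = \<rho> j)"
proof -
  let ?x = "X m n \<sigma> \<rho>"
  define Ow where "Ow i = card {j. j < n \<and> ?x i j}" for i
  define Z where "Z j = card {i. i < m \<and> \<not> ?x i j}" for j
  have cols: "\<forall>j<n. Z j mod 3 = \<rho> j"
  proof (intro allI impI)
    fix j assume "j < n"
    show "Z j mod 3 = \<rho> j"
    proof (cases "j < 4")
      case True
      then show ?thesis unfolding Z_def X_def using col_core[OF True m] r3 by simp
    next
      case False
      then show ?thesis unfolding Z_def X_def using col_ge4[of j m \<rho>] m r3 by simp
    qed
  qed
  have rows: "\<And>i. i < m \<Longrightarrow> i \<noteq> 3 \<Longrightarrow> Ow i mod 3 = \<sigma> i"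
  proof -
    fix i assume "i < m" "i \<noteq> 3"
    show "Ow i mod 3 = \<sigma> i"
    proof (cases "i < 3")
      case True
      then show ?thesis unfolding Ow_def X_def using row_small[OF True n] s3 by simp
    next
      case False
      then have "4 \<le> i" using \<open>i \<noteq> 3\<close> by simp
      then show ?thesis unfolding Ow_def X_def using row_ge4[of i n] n s3 by simp
    qed
  qed
  have row3: "Ow 3 mod 3 = \<sigma> 3"
  proof -
    let ?A = "{..<m} - {3}"
    have fin: "finite ?A" by simp
    have m3: "3 \<in> {..<m}" using m by simp
    have so: "(\<Sum>i<m. Ow i) = Ow 3 + sum Ow ?A" using sum.remove[OF _ m3, of Ow] by simp
    have ss: "(\<Sum>i<m. \<sigma> i) = \<sigma> 3 + sum \<sigma> ?A" using sum.remove[OF _ m3, of \<sigma>] by simp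
    have e1: "sum Ow ?A mod 3 = sum \<sigma> ?A mod 3"
    proof -
      have "sum Ow ?A mod 3 = (\<Sum>i\<in>?A. Ow i mod 3) mod 3" by (simp add: mod_sum_eq)
      also have "\<dots> = (\<Sum>i\<in>?A. \<sigma> i) mod 3" using rows by (intro arg_cong[where f="\<lambda>x. x mod 3"] sum.cong) auto
      finally show ?thesis .
    qed
    have e2: "sum Z {..<n} mod 3 = sum \<rho> {..<n} mod 3"
    proof -
      have "sum Z {..<n} mod 3 = (\<Sum>j<n. Z j mod 3) mod 3" by (simp add: mod_sum_eq)
      also have "\<dots> = (\<Sum>j<n. \<rho> j) mod 3" using cols by (intro arg_cong[where f="\<lambda>x. x mod 3"] sum.cong) auto
      finally show ?thesis .
    qed
    have tot: "(\<Sum>i<m. Ow i) + (\<Sum>j<n. Z j) = m * n" unfolding Ow_def Z_def by (rule count_total)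
    have "(Ow 3 + (sum Ow ?A + sum Z {..<n})) mod 3 = (\<sigma> 3 + (sum \<sigma> ?A + sum \<rho> {..<n})) mod 3"
      using tot sum so ss by (simp add: add.assoc)
    moreover have "(sum Ow ?A + sum Z {..<n}) mod 3 = (sum \<sigma> ?A + sum \<rho> {..<n}) mod 3"
      using e1 e2 by (metis mod_add_eq)
    ultimately have "(Ow 3 + (sum \<sigma> ?A + sum \<rho> {..<n})) mod 3 = (\<sigma> 3 + (sum \<sigma> ?A + sum \<rho> {..<n})) mod 3"
      by (metis mod_add_right_eq)
    then have "Ow 3 mod 3 = \<sigma> 3 mod 3" by (rule mod_cancel)
    then show ?thesis using s3 by simp
  qed
  have allrows: "\<forall>i<m. Ow i mod 3 = \<sigma> i" using rows row3 by blast
  show ?thesis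
    apply (rule exI[of _ ?x])
    using core_cycle[of m \<sigma> \<rho> "tt m n \<sigma> \<rho>"] cols_ge4[of _ n m \<sigma> \<rho> "tt m n \<sigma> \<rho>"] rows_ge4[of _ m \<sigma> \<rho> "tt m n \<sigma> \<rho>"]
      allrows cols unfolding Ow_def Z_def X_def by auto
qed

lemma red: "(2 * (a mod 3) - c) mod 3 = (2 * a - c) mod (3::int)"
  by (metis mod_diff_left_eq mod_mult_right_eq)
lemma degarith: assumes "K mod 3 = (2*(b + N)) mod 3"
  shows "(K - (N - K)) mod 3 = b mod (3::int)"
proof -
  have "(K - (N - K)) mod 3 = (2 * K - N) mod 3" by (simp add: algebra_simps)
  also have "\<dots> = (2 * (K mod 3) - N) mod 3" by (simp add: red)
  also have "\<dots> = (2 * ((2*(b + N)) mod 3) - N) mod 3" using assms by simp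
  also have "\<dots> = (2 * (2*(b + N)) - N) mod 3" by (simp add: red)
  also have "\<dots> = (b + (b + N) * 3) mod 3" by (rule arg_cong[where f="\<lambda>x. x mod 3"]) (simp add: algebra_simps)
  also have "\<dots> = b mod 3" by (rule mod_mult_self1)
  finally show ?thesis .
qed


definition Dx :: "nat \<Rightarrow> nat \<Rightarrow> (nat \<Rightarrow> nat \<Rightarrow> bool) \<Rightarrow> ((nat + nat) \<times> (nat + nat)) set" where
  "Dx m n x = {(Inl i, Inr j) | i j. i < m \<and> j < n \<and> x i j} \<union> {(Inr j, Inl i) | i j. i < m \<and> j < n \<and> \<not> x i j}"

lemma Dx_LR: "(Inl i, Inr j) \<in> Dx m n x \<longleftrightarrow> i < m \<and> j < n \<and> x i j"
  unfolding Dx_def by auto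
lemma Dx_RL: "(Inr j, Inl i) \<in> Dx m n x \<longleftrightarrow> i < m \<and> j < n \<and> \<not> x i j"
  unfolding Dx_def by auto
lemma Dx_LL: "(Inl i, Inl j) \<notin> Dx m n x" unfolding Dx_def by auto
lemma Dx_RR: "(Inr i, Inr j) \<notin> Dx m n x" unfolding Dx_def by auto

lemma orient: "is_orientation (Kmn_edges m n) (Dx m n x)"
  unfolding is_orientation_def
proof (intro conjI allI impI ballI)
  fix p assume "p \<in> Dx m n x"
  then show "case p of (u, v) \<Rightarrow> {u, v} \<in> Kmn_edges m n \<and> u \<noteq> v"
    unfolding Dx_def Kmn_edges_def by (auto simp: insert_commute)
next
  fix u v assume a: "{u, v} \<in> Kmn_edges m n \<and> u \<noteq> v"
  then obtain i j where ij: "{u, v} = {Inl i, Inr j}" "i < m" "j < n" unfolding Kmn_edges_def by auto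
  then have "(u = Inl i \<and> v = Inr j) \<or> (u = Inr j \<and> v = Inl i)" by (auto simp: doubleton_eq_iff)
  then show "(u, v) \<in> Dx m n x \<longleftrightarrow> (v, u) \<notin> Dx m n x"
    using ij by (auto simp: Dx_LR Dx_RL)
qed

lemma sc:
  assumes m: "4 \<le> m" and n: "4 \<le> n"
    and c: "x 0 0" "\<not> x 1 0" "x 1 1" "\<not> x 2 1" "x 2 2" "\<not> x 3 2" "x 3 3" "\<not> x 0 3"
    and cj: "\<forall>j. 4 \<le> j \<and> j < n \<longrightarrow> (\<exists>r<4. x r j) \<and> (\<exists>r<4. \<not> x r j)"
    and ci: "\<forall>i. 4 \<le> i \<and> i < m \<longrightarrow> x i 0 \<and> \<not> x i 3"
  shows "strongly_connected (Kmn_vertices m n) (Dx m n x)"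
proof -
  let ?D = "Dx m n x"
  have e: "(Inl 0, Inr 0) \<in> ?D" "(Inr 0, Inl 1) \<in> ?D" "(Inl 1, Inr 1) \<in> ?D" "(Inr 1, Inl 2) \<in> ?D"
    "(Inl 2, Inr 2) \<in> ?D" "(Inr 2, Inl 3) \<in> ?D" "(Inl 3, Inr 3) \<in> ?D" "(Inr 3, Inl 0) \<in> ?D"
    using c m n by (simp_all add: Dx_LR Dx_RL)
  have f1: "(Inl 0, Inr 0) \<in> ?D\<^sup>*" using e by blast
  have f2: "(Inl 0, Inl 1) \<in> ?D\<^sup>*" using f1 e by (meson rtrancl_into_rtrancl)
  have f3: "(Inl 0, Inr 1) \<in> ?D\<^sup>*" using f2 e by (meson rtrancl_into_rtrancl)
  have f4: "(Inl 0, Inl 2) \<in> ?D\<^sup>*" using f3 e by (meson rtrancl_into_rtrancl)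
  have f5: "(Inl 0, Inr 2) \<in> ?D\<^sup>*" using f4 e by (meson rtrancl_into_rtrancl)
  have f6: "(Inl 0, Inl 3) \<in> ?D\<^sup>*" using f5 e by (meson rtrancl_into_rtrancl)
  have f7: "(Inl 0, Inr 3) \<in> ?D\<^sup>*" using f6 e by (meson rtrancl_into_rtrancl)
  have b7: "(Inr 3, Inl 0) \<in> ?D\<^sup>*" using e by blast
  have b6: "(Inl 3, Inl 0) \<in> ?D\<^sup>*" using b7 e by (meson converse_rtrancl_into_rtrancl)
  have b5: "(Inr 2, Inl 0) \<in> ?D\<^sup>*" using b6 e by (meson converse_rtrancl_into_rtrancl)
  have b4: "(Inl 2, Inl 0) \<in> ?D\<^sup>*" using b5 e by (meson converse_rtrancl_into_rtrancl)
  have b3: "(Inr 1, Inl 0) \<in> ?D\<^sup>*" using b4 e by (meson converse_rtrancl_into_rtrancl)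
  have b2: "(Inl 1, Inl 0) \<in> ?D\<^sup>*" using b3 e by (meson converse_rtrancl_into_rtrancl)
  have b1: "(Inr 0, Inl 0) \<in> ?D\<^sup>*" using b2 e by (meson converse_rtrancl_into_rtrancl)
  have coreL: "\<And>r. r < 4 \<Longrightarrow> (Inl 0, Inl r) \<in> ?D\<^sup>* \<and> (Inl r, Inl 0) \<in> ?D\<^sup>*"
  proof -
    fix r :: nat assume "r < 4"
    then have "r = 0 \<or> r = 1 \<or> r = 2 \<or> r = 3" by auto
    then show "(Inl 0, Inl r) \<in> ?D\<^sup>* \<and> (Inl r, Inl 0) \<in> ?D\<^sup>*"
      using f2 f4 f6 b2 b4 b6 by auto
  qed
  have coreR: "\<And>r. r < 4 \<Longrightarrow> (Inl 0, Inr r) \<in> ?D\<^sup>* \<and> (Inr r, Inl 0) \<in> ?D\<^sup>*"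
  proof -
    fix r :: nat assume "r < 4"
    then have "r = 0 \<or> r = 1 \<or> r = 2 \<or> r = 3" by auto
    then show "(Inl 0, Inr r) \<in> ?D\<^sup>* \<and> (Inr r, Inl 0) \<in> ?D\<^sup>*"
      using f1 f3 f5 f7 b1 b3 b5 b7 by auto
  qed
  have all: "\<forall>v\<in>Kmn_vertices m n. (Inl 0, v) \<in> ?D\<^sup>* \<and> (v, Inl 0) \<in> ?D\<^sup>*"
  proof
    fix v assume "v \<in> Kmn_vertices m n"
    then consider (L) i where "v = Inl i" "i < m" | (R) j where "v = Inr j" "j < n"
      unfolding Kmn_vertices_def by auto
    then show "(Inl 0, v) \<in> ?D\<^sup>* \<and> (v, Inl 0) \<in> ?D\<^sup>*"
    proof cases
      case (L i)
      show ?thesis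
      proof (cases "i < 4")
        case True then show ?thesis using coreL L by simp
      next
        case False
        then have "x i 0" "\<not> x i 3" using ci L by auto
        then have "(Inl i, Inr 0) \<in> ?D" "(Inr 3, Inl i) \<in> ?D" using L m n by (simp_all add: Dx_LR Dx_RL)
        then show ?thesis using L f7 b1 by (meson converse_rtrancl_into_rtrancl rtrancl_into_rtrancl)
      qed
    next
      case (R j)
      show ?thesis
      proof (cases "j < 4")
        case True then show ?thesis using coreR R by simp
      next
        case False
        then have "4 \<le> j" by simp
        then have "(\<exists>r<4. x r j) \<and> (\<exists>r<4. \<not> x r j)" using cj R by blast
        then obtain r1 r2 where r: "r1 < 4" "x r1 j" "r2 < 4" "\<not> x r2 j" by blast
        then have "(Inl r1, Inr j) \<in> ?D" "(Inr j, Inl r2) \<in> ?D" using R m by (simp_all add: Dx_LR Dx_RL)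
        moreover have "(Inl 0, Inl r1) \<in> ?D\<^sup>*" "(Inl r2, Inl 0) \<in> ?D\<^sup>*" using coreL r by auto
        ultimately show ?thesis using R by (meson converse_rtrancl_into_rtrancl rtrancl_into_rtrancl)
      qed
    qed
  qed
  show ?thesis unfolding strongly_connected_def
    using all by (meson rtrancl_trans)
qed



lemma split_n: "card {j. j < (n::nat) \<and> P j} + card {j. j < n \<and> \<not> P j} = n"
proof -
  have "{j. j < n \<and> P j} \<union> {j. j < n \<and> \<not> P j} = {..<n}" by auto
  moreover have "{j. j < n \<and> P j} \<inter> {j. j < n \<and> \<not> P j} = {}" by auto
  ultimately show ?thesis using card_Un_disjoint[of "{j. j < n \<and> P j}" "{j. j < n \<and> \<not> P j}"] by simp
qed

lemma deg_lemma:
  assumes "out + inn = nn" "out mod 3 = nat ((2 * (b + int nn)) mod 3)"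
  shows "(int out - int inn) mod 3 = b mod 3"
proof -
  have "int (out mod 3) = (2 * (b + int nn)) mod 3" using assms(2) by simp
  then have "int out mod 3 = (2 * (b + int nn)) mod 3" by (simp add: zmod_int)
  moreover have "int inn = int nn - int out" using assms(1) by simp
  ultimately show ?thesis using degarith[of "int out" b "int nn"] by simp
qed

theorem mainTheorem12:
  fixes m n :: nat
  assumes "m \<ge> 4" and "n \<ge> 10"
  shows "in_S3 (Kmn_vertices m n) (Kmn_edges m n)"
  unfolding in_S3_def
proof (intro allI impI)
  fix \<beta> :: "nat + nat \<Rightarrow> int"
  assume hb: "(\<forall>v\<in>Kmn_vertices m n. \<beta> v \<in> {0, 1, 2}) \<and> (\<Sum>v\<in>Kmn_vertices m n. \<beta> v) mod 3 = 0"
  define \<sigma> where "\<sigma> i = nat ((2 * (\<beta> (Inl i) + int n)) mod 3)" for i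
  define \<rho> where "\<rho> j = nat ((2 * (\<beta> (Inr j) + int m)) mod 3)" for j
  have s3: "\<forall>i. \<sigma> i < 3" unfolding \<sigma>_def by (simp add: nat_less_iff)
  have r3: "\<forall>j. \<rho> j < 3" unfolding \<rho>_def by (simp add: nat_less_iff)
  have sumV: "(\<Sum>v\<in>Kmn_vertices m n. \<beta> v) = (\<Sum>i<m. \<beta> (Inl i)) + (\<Sum>j<n. \<beta> (Inr j))"
  proof -
    have "(\<Sum>v\<in>Kmn_vertices m n. \<beta> v) = sum \<beta> (Inl ` {..<m}) + sum \<beta> (Inr ` {..<n})"
      unfolding Kmn_vertices_def by (rule sum.union_disjoint) auto
    also have "\<dots> = (\<Sum>i<m. \<beta> (Inl i)) + (\<Sum>j<n. \<beta> (Inr j))"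
      by (simp add: sum.reindex)
    finally show ?thesis .
  qed
  have sumc: "((\<Sum>i<m. \<sigma> i) + (\<Sum>j<n. \<rho> j)) mod 3 = (m * n) mod 3"
  proof -
    let ?SL = "\<Sum>i<m. \<beta> (Inl i)" and ?SR = "\<Sum>j<n. \<beta> (Inr j)"
    have i1: "int (\<Sum>i<m. \<sigma> i) = (\<Sum>i<m. (2 * (\<beta> (Inl i) + int n)) mod 3)"
      unfolding \<sigma>_def by (simp add: of_nat_sum)
    have i2: "int (\<Sum>j<n. \<rho> j) = (\<Sum>j<n. (2 * (\<beta> (Inr j) + int m)) mod 3)"
      unfolding \<rho>_def by (simp add: of_nat_sum)
    have m1: "int (\<Sum>i<m. \<sigma> i) mod 3 = (2 * ?SL + 2 * int m * int n) mod 3"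
    proof -
      have "int (\<Sum>i<m. \<sigma> i) mod 3 = (\<Sum>i<m. 2 * (\<beta> (Inl i) + int n)) mod 3"
        unfolding i1 by (simp add: mod_sum_eq)
      also have "(\<Sum>i<m. 2 * (\<beta> (Inl i) + int n)) = 2 * ?SL + 2 * int m * int n"
        by (simp add: sum.distrib sum_distrib_left algebra_simps)
      finally show ?thesis .
    qed
    have m2: "int (\<Sum>j<n. \<rho> j) mod 3 = (2 * ?SR + 2 * int m * int n) mod 3"
    proof -
      have "int (\<Sum>j<n. \<rho> j) mod 3 = (\<Sum>j<n. 2 * (\<beta> (Inr j) + int m)) mod 3"
        unfolding i2 by (simp add: mod_sum_eq)
      also have "(\<Sum>j<n. 2 * (\<beta> (Inr j) + int m)) = 2 * ?SR + 2 * int m * int n"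
        by (simp add: sum.distrib sum_distrib_left algebra_simps)
      finally show ?thesis .
    qed
    have z: "(?SL + ?SR) mod 3 = 0" using hb sumV by simp
    then obtain k where k: "?SL + ?SR = 3 * k" by (metis dvd_def mod_0_imp_dvd)
    have "int ((\<Sum>i<m. \<sigma> i) + (\<Sum>j<n. \<rho> j)) mod 3
        = (int (\<Sum>i<m. \<sigma> i) mod 3 + int (\<Sum>j<n. \<rho> j) mod 3) mod 3" by (simp add: mod_add_eq)
    also have "\<dots> = ((2 * ?SL + 2 * int m * int n) + (2 * ?SR + 2 * int m * int n)) mod 3"
      unfolding m1 m2 by (simp add: mod_add_eq)
    also have "(2 * ?SL + 2 * int m * int n) + (2 * ?SR + 2 * int m * int n) = int m * int n + (2 * k + int m * int n) * 3"
      using k by (simp add: algebra_simps)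
    also have "(int m * int n + (2 * k + int m * int n) * 3) mod 3 = (int m * int n) mod 3"
      by (rule mod_mult_self1)
    finally have "int ((\<Sum>i<m. \<sigma> i) + (\<Sum>j<n. \<rho> j)) mod 3 = int (m * n) mod 3" by simp
    then have "int (((\<Sum>i<m. \<sigma> i) + (\<Sum>j<n. \<rho> j)) mod 3) = int ((m * n) mod 3)" by (simp add: zmod_int)
    then show ?thesis by (simp only: of_nat_eq_iff)
  qed
  obtain x where x: "x 0 0" "\<not> x 1 0" "x 1 1" "\<not> x 2 1" "x 2 2" "\<not> x 3 2" "x 3 3" "\<not> x 0 3"
    "\<forall>j. 4 \<le> j \<and> j < n \<longrightarrow> (\<exists>r<4. x r j) \<and> (\<exists>r<4. \<not> x r j)"
    "\<forall>i. 4 \<le> i \<and> i < m \<longrightarrow> x i 0 \<and> \<not> x i 3"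
    and xr: "\<forall>i<m. card {j. j < n \<and> x i j} mod 3 = \<sigma> i"
    and xc: "\<forall>j<n. card {i. i < m \<and> \<not> x i j} mod 3 = \<rho> j"
    using exists_x[OF assms s3 r3 sumc] by blast
  let ?D = "Dx m n x"
  have deg: "\<forall>v\<in>Kmn_vertices m n. (int (out_deg ?D v) - int (in_deg ?D v)) mod 3 = \<beta> v mod 3"
  proof
    fix v assume "v \<in> Kmn_vertices m n"
    then consider (L) i where "v = Inl i" "i < m" | (R) j where "v = Inr j" "j < n"
      unfolding Kmn_vertices_def by auto
    then show "(int (out_deg ?D v) - int (in_deg ?D v)) mod 3 = \<beta> v mod 3"
    proof cases
      case (L i)
      have o: "{w. (Inl i, w) \<in> ?D} = Inr ` {j. j < n \<and> x i j}"
      proof (rule set_eqI)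
        fix w show "w \<in> {w. (Inl i, w) \<in> ?D} \<longleftrightarrow> w \<in> Inr ` {j. j < n \<and> x i j}"
          using L by (cases w) (auto simp: Dx_LR Dx_LL)
      qed
      have ii: "{w. (w, Inl i) \<in> ?D} = Inr ` {j. j < n \<and> \<not> x i j}"
      proof (rule set_eqI)
        fix w show "w \<in> {w. (w, Inl i) \<in> ?D} \<longleftrightarrow> w \<in> Inr ` {j. j < n \<and> \<not> x i j}"
          using L by (cases w) (auto simp: Dx_RL Dx_LL)
      qed
      have od: "out_deg ?D (Inl i) = card {j. j < n \<and> x i j}" unfolding out_deg_def o by (simp add: card_image)
      have id: "in_deg ?D (Inl i) = card {j. j < n \<and> \<not> x i j}" unfolding in_deg_def ii by (simp add: card_image)
      show ?thesis unfolding L od id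
        by (rule deg_lemma[OF split_n]) (use xr L \<sigma>_def in auto)
    next
      case (R j)
      have o: "{w. (Inr j, w) \<in> ?D} = Inl ` {i. i < m \<and> \<not> x i j}"
      proof (rule set_eqI)
        fix w show "w \<in> {w. (Inr j, w) \<in> ?D} \<longleftrightarrow> w \<in> Inl ` {i. i < m \<and> \<not> x i j}"
          using R by (cases w) (auto simp: Dx_RL Dx_RR)
      qed
      have ii: "{w. (w, Inr j) \<in> ?D} = Inl ` {i. i < m \<and> x i j}"
      proof (rule set_eqI)
        fix w show "w \<in> {w. (w, Inr j) \<in> ?D} \<longleftrightarrow> w \<in> Inl ` {i. i < m \<and> x i j}"
          using R by (cases w) (auto simp: Dx_LR Dx_RR)
      qed
      have od: "out_deg ?D (Inr j) = card {i. i < m \<and> \<not> x i j}" unfolding out_deg_def o by (simp add: card_image)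
      have id: "in_deg ?D (Inr j) = card {i. i < m \<and> x i j}" unfolding in_deg_def ii by (simp add: card_image)
      have sp: "card {i. i < m \<and> \<not> x i j} + card {i. i < m \<and> x i j} = m"
        using split_n[of m "\<lambda>i. x i j"] by simp
      show ?thesis unfolding R od id
        by (rule deg_lemma[OF sp]) (use xc R \<rho>_def in auto)
    qed
  qed
  have "4 \<le> n" using assms by simp
  show "\<exists>D. is_orientation (Kmn_edges m n) D \<and> strongly_connected (Kmn_vertices m n) D \<and>
        (\<forall>v\<in>Kmn_vertices m n. (int (out_deg D v) - int (in_deg D v)) mod 3 = \<beta> v mod 3)"
    using orient[of m n x] sc[OF assms(1) \<open>4 \<le> n\<close> x] deg by blast
qed


end
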